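(* Assume the standing hypotheses in the context. For every $(\tau,\xi)\in\mathbb{R}\times\mathbb{R}^n$, the system $$Z'(t)=A(t)Z(t)-f(t,X(t,\tau,\xi))$$ has a unique solution $h(t,(\tau,\xi))$ that is bounded on $\mathbb{R}$, and $\|h(t,(\tau,\xi))\|\le 2K\beta\alpha^{-1}$ for all $t\in\mathbb{R}$.
   Context: Standing hypotheses: $A:\mathbb{R}\to\mathbb{R}^{n\times n}$ is continuous and bounded, $T(t,s)$ is the evolution operator of $x'=A(t)x$. $\mu:\mathbb{R}\to(0,\infty)$ is an increasing differentiable growth rate: $\mu(0)=1$, $\lim_{t\to-\infty}\mu(t)=0$, $\lim_{t\to+\infty}\mu(t)=+\infty$. The system $x'=A(t)x$ admits an algebraic dichotomy: projections $P(s)$, $Q(s)=I-P(s)$, constants $K,\alpha>0$ with $T(t,s)P(s)=P(t)T(t,s)$, $\|T(t,s)P(s)\|\le K(\mu(t)/\mu(s))^{-\alpha}$ ($t\ge s$), $\|T(t,s)Q(s)\|\le K(\mu(s)/\mu(t))^{-\alpha}$ ($t\le s$). $f:\mathbb{R}\times\mathbb{R}^n\to\mathbb{R}^n$ is continuous, $\|f(t,x)\|\le\beta\mu'(t)\mu^{-1}(t)$, $\|f(t,x_1)-f(t,x_2)\|\le\gamma\mu'(t)\mu^{-1}(t)\|x_1-x_2\|$ for constants $\beta,\gamma\ge0$, and $6K\gamma\alpha^{-1}<1$. $X(t,\tau,\xi)$ denotes the solution of $x'=A(t)x+f(t,x)$ with $X(\tau)=\xi$. *)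

theory Defs
  imports "HOL-Analysis.Analysis"
begin

definition opnorm :: "real^'n^'n \<Rightarrow> real" where
  "opnorm M = onorm (\<lambda>x. M *v x)"

definition evolution_operator :: "(real \<Rightarrow> real^'n^'n) \<Rightarrow> (real \<Rightarrow> real \<Rightarrow> real^'n^'n) \<Rightarrow> bool" where
  "evolution_operator A T \<longleftrightarrow>
     (\<forall>s. T s s = mat 1 \<and> (\<forall>t. ((\<lambda>t. T t s) has_vector_derivative (A t ** T t s)) (at t)))"

definition growth_rate :: "(real \<Rightarrow> real) \<Rightarrow> bool" where
  "growth_rate \<mu> \<longleftrightarrow> mono \<mu> \<and> (\<forall>t. \<mu> t > 0) \<and> (\<forall>t. \<mu> differentiable (at t)) \<and>
     \<mu> 0 = 1 \<and> (\<mu> \<longlongrightarrow> 0) at_bot \<and> filterlim \<mu> at_top at_top"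

definition algebraic_dichotomy ::
  "(real \<Rightarrow> real \<Rightarrow> real^'n^'n) \<Rightarrow> (real \<Rightarrow> real) \<Rightarrow> (real \<Rightarrow> real^'n^'n) \<Rightarrow> real \<Rightarrow> real \<Rightarrow> bool" where
  "algebraic_dichotomy T \<mu> P K \<alpha> \<longleftrightarrow> K > 0 \<and> \<alpha> > 0 \<and>
     (\<forall>s. P s ** P s = P s) \<and>
     (\<forall>t s. T t s ** P s = P t ** T t s) \<and>
     (\<forall>t s. t \<ge> s \<longrightarrow> opnorm (T t s ** P s) \<le> K * (\<mu> t / \<mu> s) powr (-\<alpha>)) \<and>
     (\<forall>t s. t \<le> s \<longrightarrow> opnorm (T t s ** (mat 1 - P s)) \<le> K * (\<mu> s / \<mu> t) powr (-\<alpha>))"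

end

theory Submission
  imports Defs
begin


lemma mv_norm_le:
  fixes M :: "real^'n^'m"
  shows "norm (M *v x) \<le> real CARD('m) * real CARD('n) * norm M * norm x"
proof -
  have "\<And>i j. \<bar>M$i$j\<bar> \<le> norm M"
  proof -
    fix i j
    have "\<bar>M$i$j\<bar> \<le> norm (M$i)" by (rule component_le_norm_cart)
    also have "\<dots> \<le> norm M" by (rule Finite_Cartesian_Product.norm_nth_le)
    finally show "\<bar>M$i$j\<bar> \<le> norm M" .
  qed
  then have "onorm ((*v) M) \<le> real CARD('m) * real CARD('n) * norm M"
    by (rule onorm_le_matrix_component)
  moreover have "norm (M *v x) \<le> onorm ((*v) M) * norm x"
    using onorm[OF matrix_vector_mul_bounded_linear] by blast
  ultimately show ?thesis
    by (meson mult_right_mono norm_ge_zero order_trans)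
qed

lemma mv_bilinear: "bounded_bilinear (\<lambda>(M::real^'n^'m) (x::real^'n). M *v x)"
proof
  fix a a' :: "real^'n^'m" and b b' :: "real^'n" and r :: real
  show "(a + a') *v b = a *v b + a' *v b" by (simp add: algebra_simps)
  show "a *v (b + b') = a *v b + a *v b'" by (simp add: algebra_simps)
  show "(r *\<^sub>R a) *v b = r *\<^sub>R (a *v b)"
    by (simp add: matrix_vector_mult_def vec_eq_iff sum_distrib_left mult.assoc)
  show "a *v (r *\<^sub>R b) = r *\<^sub>R (a *v b)"
    by (simp add: matrix_vector_mult_def vec_eq_iff sum_distrib_left mult.left_commute)
next
  show "\<exists>K. \<forall>a b. norm ((a::real^'n^'m) *v (b::real^'n)) \<le> norm a * norm b * K"
    using mv_norm_le by (metis mult.commute mult.left_commute)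
qed

lemma mv_left_linear: "bounded_linear (\<lambda>(M::real^'n^'m). M *v v)"
  using bounded_bilinear.bounded_linear_left[OF mv_bilinear] .

lemma antiderivative_UNIV:
  fixes F :: "real \<Rightarrow> 'a::banach"
  assumes "continuous_on UNIV F"
  shows "\<exists>G. \<forall>x. (G has_vector_derivative F x) (at x)"
proof -
  define G where "G t = integral {0..t} F - integral {t..0} F" for t
  have "(G has_vector_derivative F x) (at x)" for x
  proof -
    define a where "a = - (\<bar>x\<bar> + 1)"
    define b where "b = \<bar>x\<bar> + 1"
    have ab: "a < x" "x < b" "a < 0" "0 < b" unfolding a_def b_def by auto
    have cab: "continuous_on {a..b} F" using assms continuous_on_subset by blast
    have int: "F integrable_on {a..b}" using integrable_continuous_real[OF cab] .
    have "((\<lambda>u. integral {a..u} F) has_vector_derivative F x) (at x within {a..b})"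
      using integral_has_vector_derivative[OF cab] ab by auto
    then have "((\<lambda>u. integral {a..u} F) has_vector_derivative F x) (at x within {a<..<b})"
      by (rule has_vector_derivative_within_subset) auto
    then have "((\<lambda>u. integral {a..u} F) has_vector_derivative F x) (at x)"
      using has_vector_derivative_within_open[of x "{a<..<b}"] ab by auto
    then have d: "((\<lambda>u. integral {a..u} F - integral {a..0} F) has_vector_derivative F x) (at x)"
      using has_vector_derivative_diff[OF _ has_vector_derivative_const] by fastforce
    show ?thesis
    proof (rule has_vector_derivative_transform_within_open[OF d, of "{a<..<b}"])
      fix y assume y: "y \<in> {a<..<b}"
      show "integral {a..y} F - integral {a..0} F = G y"
      proof (cases "0 \<le> y")
        case True
        have "integral {a..0} F + integral {0..y} F = integral {a..y} F"
          by (rule Henstock_Kurzweil_Integration.integral_combine) (use ab y True int in \<open>auto intro: integrable_subinterval_real\<close>)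
        moreover have "integral {y..0} F = 0" using True
          by (cases "y = 0") auto
        ultimately show ?thesis unfolding G_def by (simp add: algebra_simps)
      next
        case False
        have "integral {a..y} F + integral {y..0} F = integral {a..0} F"
          by (rule Henstock_Kurzweil_Integration.integral_combine) (use ab y False int in \<open>auto intro: integrable_subinterval_real\<close>)
        moreover have "integral {0..y} F = 0" using False by auto
        ultimately show ?thesis unfolding G_def by (simp add: algebra_simps)
      qed
    qed (use ab in auto)
  qed
  then show ?thesis by blast
qed



locale linsys =
  fixes A :: "real \<Rightarrow> real^'n^'n" and T :: "real \<Rightarrow> real \<Rightarrow> real^'n^'n" and M :: real
  assumes Abnd: "\<And>t v. norm (A t *v v) \<le> M * norm v"
    and Mnn: "0 \<le> M"
    and Tid: "\<And>s. T s s = mat 1"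
    and Tder: "\<And>s t. ((\<lambda>t. T t s) has_vector_derivative (A t ** T t s)) (at t)"
begin

lemma growth:
  assumes x: "\<And>t. (x has_vector_derivative A t *v x t) (at t)"
  shows "norm (x t) \<le> exp (M * \<bar>t - s\<bar>) * norm (x s)"
proof -
  have q: "((\<lambda>t. x t \<bullet> x t) has_real_derivative 2 * (x u \<bullet> (A u *v x u))) (at u)" for u
    using bounded_bilinear.has_vector_derivative[OF bounded_bilinear_inner x x, of u]
    by (simp add: has_real_derivative_iff_has_vector_derivative inner_commute)
  have ib: "x u \<bullet> (A u *v x u) \<le> M * (x u \<bullet> x u)" 
    and ib2: "- (x u \<bullet> (A u *v x u)) \<le> M * (x u \<bullet> x u)" for u
  proof -
    have "\<bar>x u \<bullet> (A u *v x u)\<bar> \<le> norm (x u) * norm (A u *v x u)"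
      by (rule Cauchy_Schwarz_ineq2)
    also have "\<dots> \<le> norm (x u) * (M * norm (x u))"
      by (rule mult_left_mono[OF Abnd]) simp
    also have "\<dots> = M * (x u \<bullet> x u)"
      by (simp add: dot_square_norm power2_eq_square)
    finally show "x u \<bullet> (A u *v x u) \<le> M * (x u \<bullet> x u)" 
      and "- (x u \<bullet> (A u *v x u)) \<le> M * (x u \<bullet> x u)" by linarith+
  qed
  have key: "x t \<bullet> x t \<le> exp (2 * M * \<bar>t - s\<bar>) * (x s \<bullet> x s)"
  proof (cases "s \<le> t")
    case True
    have "exp (-2 * M * t) * (x t \<bullet> x t) \<le> exp (-2*M * s) * (x s \<bullet> x s)"
    proof (rule DERIV_nonpos_imp_nonincreasing[OF True, where f="\<lambda>u. exp (-2 * M * u) * (x u \<bullet> x u)"])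
      fix u
      have d: "((\<lambda>u. exp (-2 * M * u) * (x u \<bullet> x u)) has_real_derivative
           exp (-2 * M * u) * (-2 * M) * (x u \<bullet> x u) + exp (-2 * M * u) * (2 * (x u \<bullet> (A u *v x u)))) (at u)"
        by (auto intro!: derivative_eq_intros q simp: algebra_simps)
      have "exp (-2 * M * u) * (-2 * M) * (x u \<bullet> x u) + exp (-2 * M * u) * (2 * (x u \<bullet> (A u *v x u)))
          = 2 * exp (-2 * M * u) * (x u \<bullet> (A u *v x u) - M * (x u \<bullet> x u))" by (simp add: algebra_simps)
      also have "\<dots> \<le> 0" using ib[of u] by (simp add: mult_nonneg_nonpos)
      finally show "\<exists>y. ((\<lambda>u. exp (-2 * M * u) * (x u \<bullet> x u)) has_real_derivative y) (at u) \<and> y \<le> 0"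
        using d by blast
    qed
    then have "exp (2 * M * t) * (exp (-2 * M * t) * (x t \<bullet> x t)) \<le> exp (2 * M * t) * (exp (-2*M * s) * (x s \<bullet> x s))"
      by (simp add: mult_left_mono)
    then have "x t \<bullet> x t \<le> exp (2 * M * t + -2*M * s) * (x s \<bullet> x s)"
      by (simp add: exp_add[symmetric] mult.assoc[symmetric] del: exp_add)
    then show ?thesis using True by (simp add: algebra_simps)
  next
    case False
    then have ts: "t \<le> s" by simp
    have "exp (2 * M * t) * (x t \<bullet> x t) \<le> exp (2*M * s) * (x s \<bullet> x s)"
    proof (rule DERIV_nonneg_imp_nondecreasing[OF ts, where f="\<lambda>u. exp (2 * M * u) * (x u \<bullet> x u)"])
      fix u
      have d: "((\<lambda>u. exp (2 * M * u) * (x u \<bullet> x u)) has_real_derivative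
           exp (2 * M * u) * (2 * M) * (x u \<bullet> x u) + exp (2 * M * u) * (2 * (x u \<bullet> (A u *v x u)))) (at u)"
        by (auto intro!: derivative_eq_intros q simp: algebra_simps)
      have "exp (2 * M * u) * (2 * M) * (x u \<bullet> x u) + exp (2 * M * u) * (2 * (x u \<bullet> (A u *v x u)))
          = 2 * exp (2 * M * u) * (x u \<bullet> (A u *v x u) + M * (x u \<bullet> x u))" by (simp add: algebra_simps)
      also have "\<dots> \<ge> 0" using ib2[of u] by simp
      finally show "\<exists>y. ((\<lambda>u. exp (2 * M * u) * (x u \<bullet> x u)) has_real_derivative y) (at u) \<and> y \<ge> 0"
        using d by blast
    qed
    then have "exp (-2 * M * t) * (exp (2 * M * t) * (x t \<bullet> x t)) \<le> exp (-2 * M * t) * (exp (2*M * s) * (x s \<bullet> x s))"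
      by (simp add: mult_left_mono)
    then have "x t \<bullet> x t \<le> exp (-2 * M * t + 2*M * s) * (x s \<bullet> x s)"
      by (simp add: exp_add[symmetric] mult.assoc[symmetric] del: exp_add)
    then show ?thesis using ts by (simp add: algebra_simps)
  qed
  have "(norm (x t))\<^sup>2 \<le> (exp (M * \<bar>t - s\<bar>) * norm (x s))\<^sup>2"
    using key by (simp add: dot_square_norm power_mult_distrib exp_double[symmetric] algebra_simps)
  then show ?thesis
    by (rule power2_le_imp_le) simp
qed

lemma uniq0:
  assumes x: "\<And>t. (x has_vector_derivative A t *v x t) (at t)" and "x s = 0"
  shows "x t = 0"
  using growth[OF x, of t s] assms(2) by simp

lemma Tv_der: "((\<lambda>t. T t s *v v) has_vector_derivative A t *v (T t s *v v)) (at t)"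
proof -
  have "((\<lambda>t. (\<lambda>M. M *v v) (T t s)) has_vector_derivative (\<lambda>M. M *v v) (A t ** T t s)) (at t)"
    by (rule bounded_linear.has_vector_derivative[OF mv_left_linear Tder])
  then show ?thesis by (simp add: matrix_vector_mul_assoc)
qed

lemma Tcomp: "T u s *v v = T u r *v (T r s *v v)"
proof -
  define y where "y u = T u s *v v - T u r *v (T r s *v v)" for u
  have "y u = 0"
  proof (rule uniq0)
    show "(y has_vector_derivative A t *v y t) (at t)" for t
      using has_vector_derivative_diff[OF Tv_der[where s=s and v=v] Tv_der[where s=r and v="T r s *v v"]]
      unfolding y_def by (simp add: matrix_vector_mult_diff_distrib)
    show "y r = 0" by (simp add: Tid y_def)
  qed
  then show ?thesis by (simp add: y_def)
qed

lemma Tnorm: "norm (T t s *v v) \<le> exp (M * \<bar>t - s\<bar>) * norm v"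
  using growth[OF Tv_der[of s v], of t s] by (simp add: Tid)

lemma Tcont: "((\<lambda>y. T y x *v w) \<longlongrightarrow> w) (at x)"
proof -
  have "isCont (\<lambda>y. T y x *v w) x"
    using has_vector_derivative_continuous[OF Tv_der] by blast
  then show ?thesis by (simp add: isCont_def Tid)
qed

lemma Tnorm_loc:
  assumes "\<bar>y - x\<bar> < 1"
  shows "norm (T t y *v w) \<le> exp (M * (\<bar>t - x\<bar> + 1)) * norm w"
proof -
  have "exp (M * \<bar>t - y\<bar>) \<le> exp (M * (\<bar>t - x\<bar> + 1))"
    using assms Mnn by (auto intro!: mult_left_mono)
  then show ?thesis
    using Tnorm[of t y w] by (meson mult_right_mono norm_ge_zero order_trans)
qed

lemma deriv_Th:
  assumes h: "\<And>t. (h has_vector_derivative A t *v h t - g t) (at t)"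
  shows "((\<lambda>u. T t u *v h u) has_vector_derivative -(T t x *v g x)) (at x)"
proof -
  define C where "C = exp (M * (\<bar>t - x\<bar> + 1))"
  have Cpos: "C > 0" unfolding C_def by simp
  define q where "q y = h y - T y x *v h x" for y
  have qd: "(q has_vector_derivative - g x) (at x)"
    using has_vector_derivative_diff[OF h[of x] Tv_der[where s=x and v="h x" and t=x]]
    unfolding q_def by (simp add: Tid)
  have qd': "\<forall>e>0. \<exists>d>0. \<forall>y. norm (y - x) < d \<longrightarrow> norm (q y - q x - (y - x) *\<^sub>R (- g x)) \<le> e * norm (y - x)"
    using qd unfolding has_vector_derivative_def has_derivative_at_alt by blast
  have tc: "\<forall>e>0. \<exists>d>0. \<forall>y. norm (y - x) < d \<longrightarrow> norm (g x - T y x *v g x) \<le> e"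
  proof (intro allI impI)
    fix e :: real assume "e > 0"
    then obtain d where "d > 0" and d: "\<And>y. y \<noteq> x \<and> norm (y - x) < d \<Longrightarrow> norm (T y x *v g x - g x) < e"
      using Tcont[of x "g x"] unfolding LIM_eq by blast
    show "\<exists>d>0. \<forall>y. norm (y - x) < d \<longrightarrow> norm (g x - T y x *v g x) \<le> e"
    proof (intro exI[of _ d] conjI allI impI)
      fix y assume "norm (y - x) < d"
      then show "norm (g x - T y x *v g x) \<le> e"
        using d[of y] \<open>e > 0\<close> by (cases "y = x") (auto simp: Tid norm_minus_commute)
    qed (use \<open>d > 0\<close> in auto)
  qed
  show ?thesis
    unfolding has_vector_derivative_def has_derivative_at_alt
  proof (intro conjI allI impI)
    show "bounded_linear (\<lambda>d. d *\<^sub>R -(T t x *v g x))" by (rule bounded_linear_scaleR_left)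
    fix e :: real assume e: "e > 0"
    have e2: "e / (2 * C) > 0" using e Cpos by simp
    obtain d1 where d1: "d1 > 0" "\<And>y. norm (y - x) < d1 \<Longrightarrow> norm (q y - q x - (y - x) *\<^sub>R (- g x)) \<le> e / (2 * C) * norm (y - x)"
      using qd' e2 by blast
    obtain d2 where d2: "d2 > 0" "\<And>y. norm (y - x) < d2 \<Longrightarrow> norm (g x - T y x *v g x) \<le> e / (2 * C)"
      using tc e2 by blast
    show "\<exists>d>0. \<forall>y. norm (y - x) < d \<longrightarrow> norm (T t y *v h y - T t x *v h x - (y - x) *\<^sub>R -(T t x *v g x)) \<le> e * norm (y - x)"
    proof (intro exI[of _ "min 1 (min d1 d2)"] conjI allI impI)
      fix y assume y: "norm (y - x) < min 1 (min d1 d2)"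
      have c1: "T t x *v h x = T t y *v (T y x *v h x)" and c2: "T t x *v g x = T t y *v (T y x *v g x)"
        by (rule Tcomp)+
      have qx: "q x = 0" by (simp add: q_def Tid)
      have eq: "T t y *v h y - T t x *v h x - (y - x) *\<^sub>R -(T t x *v g x)
         = T t y *v (q y - q x - (y - x) *\<^sub>R (- g x)) - (y - x) *\<^sub>R (T t y *v (g x - T y x *v g x))"
        apply (simp only: c1 c2 qx q_def)
        apply (simp add: algebra_simps Tid)
        done
      have yx1: "\<bar>y - x\<bar> < 1" using y by auto
      have "norm (T t y *v (q y - q x - (y - x) *\<^sub>R (- g x))) \<le> C * norm (q y - q x - (y - x) *\<^sub>R (- g x))"
        using Tnorm_loc[OF yx1, of t "q y - q x - (y - x) *\<^sub>R (- g x)"] unfolding C_def .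
      also have "\<dots> \<le> C * (e / (2 * C) * norm (y - x))"
        using d1(2)[of y] y Cpos by (intro mult_left_mono) auto
      finally have n1: "norm (T t y *v (q y - q x - (y - x) *\<^sub>R (- g x))) \<le> C * (e / (2 * C) * norm (y - x))" .
      have "norm (T t y *v (g x - T y x *v g x)) \<le> C * norm (g x - T y x *v g x)"
        using Tnorm_loc[OF yx1, of t "g x - T y x *v g x"] unfolding C_def .
      also have "\<dots> \<le> C * (e / (2 * C))"
        using d2(2)[of y] y Cpos by (intro mult_left_mono) auto
      finally have "norm (T t y *v (g x - T y x *v g x)) \<le> C * (e / (2 * C))" .
      then have n2: "norm ((y - x) *\<^sub>R (T t y *v (g x - T y x *v g x))) \<le> norm (y - x) * (C * (e / (2 * C)))"
        by (simp add: mult_left_mono)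
      have "norm (T t y *v h y - T t x *v h x - (y - x) *\<^sub>R -(T t x *v g x))
          \<le> C * (e / (2 * C) * norm (y - x)) + norm (y - x) * (C * (e / (2 * C)))"
        unfolding eq using norm_triangle_ineq4 n1 n2 by (rule order_trans[OF _ add_mono])
      also have "\<dots> = e * norm (y - x)" using Cpos by (simp add: field_simps)
      finally show "norm (T t y *v h y - T t x *v h x - (y - x) *\<^sub>R -(T t x *v g x)) \<le> e * norm (y - x)" .
    qed (use d1 d2 in auto)
  qed
qed

lemma var_const:
  assumes h: "\<And>t. (h has_vector_derivative A t *v h t - g t) (at t)" and "r \<le> t"
  shows "((\<lambda>s. T t s *v g s) has_integral (T t r *v h r - h t)) {r..t}"
proof -
  have "((\<lambda>s. -(T t s *v g s)) has_integral (T t t *v h t - T t r *v h r)) {r..t}"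
    by (rule fundamental_theorem_of_calculus[OF \<open>r \<le> t\<close>])
       (rule has_vector_derivative_at_within[OF deriv_Th[OF h]])
  from has_integral_neg[OF this] show ?thesis by (simp add: Tid)
qed

end


lemma mv_minus: "(A::real^'n^'m) *v (- x) = - (A *v x)"
  by (metis diff_0 matrix_vector_mult_diff_distrib matrix_vector_mult_0_right)

context linsys begin

lemma Tg_int:
  assumes h: "\<And>t. (h has_vector_derivative A t *v h t - g t) (at t)" and "a \<le> b"
  shows "((\<lambda>s. T t s *v g s) has_integral (T t a *v h a - T t b *v h b)) {a..b}"
proof -
  have "((\<lambda>s. -(T t s *v g s)) has_integral (T t b *v h b - T t a *v h a)) {a..b}"
    by (rule fundamental_theorem_of_calculus[OF \<open>a \<le> b\<close>])
       (rule has_vector_derivative_at_within[OF deriv_Th[OF h]])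
  from has_integral_neg[OF this] show ?thesis by simp
qed

lemma Tg_cont:
  assumes g: "continuous_on UNIV g"
  shows "continuous_on UNIV (\<lambda>s. T t s *v g s)"
proof -
  have "isCont (\<lambda>s. T t s *v g s) x" for x
  proof -
    define C where "C = exp (M * (\<bar>t - x\<bar> + 1))"
    have gx: "(g \<longlongrightarrow> g x) (at x)" using g by (simp add: continuous_on_def)
    have "((\<lambda>y. T t y *v g y - T t x *v g x) \<longlongrightarrow> 0) (at x)"
    proof (rule Lim_null_comparison)
      show "\<forall>\<^sub>F y in at x. norm (T t y *v g y - T t x *v g x) \<le> C * (norm (g y - g x) + norm (g x - T y x *v g x))"
      proof -
        have "\<forall>\<^sub>F y in at x. dist y x < 1" unfolding eventually_at by (intro exI[of _ 1]) auto
        then show ?thesis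
        proof (rule eventually_mono)
          fix y assume "dist y x < 1"
          then have yx: "\<bar>y - x\<bar> < 1" by (simp add: dist_real_def)
          have "T t y *v g y - T t x *v g x = T t y *v ((g y - g x) + (g x - T y x *v g x))"
            using Tcomp[of t x "g x" y] by (simp add: algebra_simps)
          then show "norm (T t y *v g y - T t x *v g x) \<le> C * (norm (g y - g x) + norm (g x - T y x *v g x))"
            using Tnorm_loc[OF yx, of t] norm_triangle_ineq[of "g y - g x" "g x - T y x *v g x"]
            unfolding C_def
            by (smt (verit, best) exp_gt_zero mult_left_mono)
        qed
      qed
      have t1: "((\<lambda>y. norm (g y - g x)) \<longlongrightarrow> 0) (at x)"
        using tendsto_norm_zero[OF LIM_zero[OF gx]] .
      have t2: "((\<lambda>y. norm (g x - T y x *v g x)) \<longlongrightarrow> 0) (at x)"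
      proof -
        have "((\<lambda>y. g x - T y x *v g x) \<longlongrightarrow> 0) (at x)"
          using tendsto_diff[OF tendsto_const Tcont[of x "g x"], of "g x"] by simp
        then show ?thesis by (rule tendsto_norm_zero)
      qed
      show "((\<lambda>y. C * (norm (g y - g x) + norm (g x - T y x *v g x))) \<longlongrightarrow> 0) (at x)"
        using tendsto_mult_right_zero[OF tendsto_add_zero[OF t1 t2]] .
    qed
    then show ?thesis unfolding isCont_def by (rule LIM_zero_cancel)
  qed
  then show ?thesis by (simp add: continuous_at_imp_continuous_on)
qed

lemma exist_sol:
  assumes g: "continuous_on UNIV g"
  shows "\<exists>h. h 0 = \<eta> \<and> (\<forall>t. (h has_vector_derivative A t *v h t - g t) (at t))"
proof -
  obtain G where G: "\<And>x. (G has_vector_derivative T 0 x *v g x) (at x)"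
    using antiderivative_UNIV[OF Tg_cont[OF g, of 0]] by blast
  define h where "h t = T t 0 *v (\<eta> - G t + G 0)" for t
  have "(h has_vector_derivative A t *v h t - g t) (at t)" for t
  proof -
    have d: "((\<lambda>t. \<eta> - G t + G 0) has_vector_derivative - (T 0 t *v g t)) (at t)"
      using G[of t] by (auto intro!: derivative_eq_intros)
    have "(h has_vector_derivative (T t 0 *v (- (T 0 t *v g t)) + (A t ** T t 0) *v (\<eta> - G t + G 0))) (at t)"
      unfolding h_def
      using bounded_bilinear.has_vector_derivative[OF mv_bilinear Tder[of 0 t] d] .
    moreover have "T t 0 *v (- (T 0 t *v g t)) + (A t ** T t 0) *v (\<eta> - G t + G 0) = A t *v h t - g t"
      using Tcomp[of t t "g t" 0] by (simp add: h_def Tid matrix_vector_mul_assoc[symmetric] mv_minus)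
    ultimately show ?thesis by simp
  qed
  moreover have "h 0 = \<eta>" by (simp add: h_def Tid)
  ultimately show ?thesis by blast
qed

end

lemma cauchy_lemma:
  fixes I :: "real \<Rightarrow> 'a::banach"
  assumes b: "\<And>a b. c \<le> a \<Longrightarrow> a \<le> b \<Longrightarrow> norm (I b - I a) \<le> \<phi> a"
    and phi: "(\<phi> \<longlongrightarrow> 0) at_top"
  shows "\<exists>L. \<forall>r\<ge>c. norm (I r - L) \<le> \<phi> r"
proof -
  define u where "u n = I (c + real n)" for n
  have lim: "((\<lambda>n. \<phi> (c + real n)) \<longlongrightarrow> 0) sequentially"
    by (rule filterlim_compose[OF phi filterlim_tendsto_add_at_top[OF tendsto_const filterlim_real_sequentially]])
  have "Cauchy u"
  proof (rule metric_CauchyI)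
    fix e :: real assume "e > 0"
    then have "\<forall>\<^sub>F n in sequentially. \<phi> (c + real n) < e/2"
      using order_tendstoD(2)[OF lim, of "e/2"] by simp
    then obtain N where N: "\<And>n. n \<ge> N \<Longrightarrow> \<phi> (c + real n) < e/2"
      unfolding eventually_sequentially by blast
    have "dist (u m) (u n) < e" if "m \<ge> N" "n \<ge> N" for m n
    proof -
      have "norm (u m - u N) \<le> \<phi> (c + real N)" "norm (u n - u N) \<le> \<phi> (c + real N)"
        using b[of "c + real N" "c + real m"] b[of "c + real N" "c + real n"] that by (auto simp: u_def)
      moreover have "norm (u m - u n) \<le> norm (u m - u N) + norm (u n - u N)"
        using norm_triangle_ineq4[of "u m - u N" "u n - u N"] by simp
      ultimately show ?thesis using N[of N] by (simp add: dist_norm)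
    qed
    then show "\<exists>M. \<forall>m\<ge>M. \<forall>n\<ge>M. dist (u m) (u n) < e" by blast
  qed
  then obtain L where L: "u \<longlonglongrightarrow> L"
    using Cauchy_convergent_iff convergent_def by blast
  have "norm (I r - L) \<le> \<phi> r" if "r \<ge> c" for r
  proof -
    have "((\<lambda>n. u n - I r) \<longlongrightarrow> L - I r) sequentially"
      using L by (intro tendsto_intros)
    moreover have "\<forall>\<^sub>F n in sequentially. norm (u n - I r) \<le> \<phi> r"
    proof -
      obtain N :: nat where "real N \<ge> r - c" using real_arch_simple by blast
      then show ?thesis unfolding eventually_sequentially u_def
        using b that by (intro exI[of _ N]) (auto)
    qed
    ultimately have "norm (L - I r) \<le> \<phi> r"
      by (intro Lim_norm_ubound) auto
    then show ?thesis by (simp add: norm_minus_commute)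
  qed
  then show ?thesis by blast
qed



locale dichsys = linsys A T M for A :: "real \<Rightarrow> real^'n^'n" and T M +
  fixes P :: "real \<Rightarrow> real^'n^'n" and \<mu> :: "real \<Rightarrow> real" and K \<alpha> :: real
  assumes Kpos: "K > 0" and apos: "\<alpha> > 0"
  and Pidem: "\<And>s v. P s *v (P s *v v) = P s *v v"
  and PT: "\<And>t s v. T t s *v (P s *v v) = P t *v (T t s *v v)"
  and dP: "\<And>t s v. s \<le> t \<Longrightarrow> norm (T t s *v (P s *v v)) \<le> K * (\<mu> t / \<mu> s) powr (-\<alpha>) * norm v"
  and dQ: "\<And>t s v. t \<le> s \<Longrightarrow> norm (T t s *v (v - P s *v v)) \<le> K * (\<mu> s / \<mu> t) powr (-\<alpha>) * norm v"
  and mupos: "\<And>t. \<mu> t > 0"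
  and muder: "\<And>t. (\<mu> has_real_derivative deriv \<mu> t) (at t)"
  and mubot: "(\<mu> \<longlongrightarrow> 0) at_bot" and mutop: "filterlim \<mu> at_top at_top" and mu0: "\<mu> 0 = 1"
begin

lemma mupow_bot: "((\<lambda>r. \<mu> r powr \<alpha>) \<longlongrightarrow> 0) at_bot"
  by (rule tendsto_zero_powrI[OF mubot tendsto_const]) (use mupos apos in \<open>auto intro: always_eventually less_imp_le\<close>)

lemma mupow_top: "((\<lambda>r. \<mu> r powr (-\<alpha>)) \<longlongrightarrow> 0) at_top"
proof -
  have "((\<lambda>r. inverse (\<mu> r) powr \<alpha>) \<longlongrightarrow> 0) at_top"
    by (rule tendsto_zero_powrI[OF tendsto_inverse_0_at_top[OF mutop] tendsto_const])
       (use mupos apos in \<open>auto intro: always_eventually less_imp_le\<close>)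
  then show ?thesis by (simp add: inverse_powr powr_minus)
qed

lemma HP:
  assumes h: "\<And>t. (h has_vector_derivative A t *v h t - g t) (at t)" and "a \<le> b"
  shows "((\<lambda>s. T t s *v (P s *v g s)) has_integral (T t a *v (P a *v h a) - T t b *v (P b *v h b))) {a..b}"
proof -
  have "((\<lambda>v. P t *v v) \<circ> (\<lambda>s. T t s *v g s) has_integral P t *v (T t a *v h a - T t b *v h b)) {a..b}"
    by (rule has_integral_linear[OF Tg_int[OF h \<open>a \<le> b\<close>]]) simp
  then show ?thesis by (simp add: o_def PT matrix_vector_mult_diff_distrib)
qed

lemma HQ:
  assumes h: "\<And>t. (h has_vector_derivative A t *v h t - g t) (at t)" and "a \<le> b"
  shows "((\<lambda>s. T t s *v (g s - P s *v g s)) has_integral (T t a *v (h a - P a *v h a) - T t b *v (h b - P b *v h b))) {a..b}"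
  using has_integral_diff[OF Tg_int[OF h \<open>a \<le> b\<close>, of t] HP[OF h \<open>a \<le> b\<close>, of t]]
  by (simp add: matrix_vector_mult_diff_distrib algebra_simps)

lemma powr_aux1:
  fixes x y a c :: real
  assumes "x > 0" "y > 0"
  shows "(x / y) powr (-a) * (c / y) = x powr (-a) * (y powr (a - 1) * c)"
proof -
  have l: "ln (x/y) = ln x - ln y" using assms by (rule ln_divide_pos)
  have 1: "(x / y) powr (-a) = x powr (-a) * y powr a"
    using assms by (simp add: powr_def l exp_add[symmetric] algebra_simps)
  have 2: "y powr (a - 1) = y powr a / y" using assms by (simp add: powr_diff)
  show ?thesis unfolding 1 2 by simp
qed

lemma powr_aux2:
  fixes x y a c :: real
  assumes "x > 0" "y > 0"
  shows "(y / x) powr (-a) * (c / y) = x powr a * (y powr (-a - 1) * c)"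
proof -
  have l: "ln (y/x) = ln y - ln x" using assms by (intro ln_divide_pos) auto
  have 1: "(y / x) powr (-a) = y powr (-a) * x powr a"
    using assms by (simp add: powr_def l exp_add[symmetric] algebra_simps)
  have 2: "y powr (-a - 1) = y powr (-a) / y" using assms by (simp add: powr_diff)
  show ?thesis unfolding 1 2 by simp
qed

lemma IBP:
  assumes int: "(\<lambda>s. T t s *v (P s *v g s)) integrable_on {a..b}" and ab: "a \<le> b" "b \<le> t"
    and gb: "\<And>s. norm (g s) \<le> \<beta> * deriv \<mu> s / \<mu> s"
  shows "norm (integral {a..b} (\<lambda>s. T t s *v (P s *v g s))) \<le> K * \<beta> / \<alpha> * \<mu> t powr (-\<alpha>) * (\<mu> b powr \<alpha> - \<mu> a powr \<alpha>)"
proof -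
  define \<Phi> where "\<Phi> s = K * \<beta> / \<alpha> * \<mu> t powr (-\<alpha>) * \<mu> s powr \<alpha>" for s
  define \<phi> where "\<phi> s = K * \<beta> * \<mu> t powr (-\<alpha>) * (\<mu> s powr (\<alpha> - 1) * deriv \<mu> s)" for s
  have "(\<Phi> has_real_derivative \<phi> s) (at s)" for s
  proof -
    have "((\<lambda>s. K * \<beta> / \<alpha> * \<mu> t powr (-\<alpha>) * \<mu> s powr \<alpha>) has_real_derivative
        K * \<beta> / \<alpha> * \<mu> t powr (-\<alpha>) * (\<alpha> * \<mu> s powr (\<alpha> - of_nat 1) * deriv \<mu> s)) (at s)"
      by (intro DERIV_cmult DERIV_fun_powr muder mupos)
    then show ?thesis using apos unfolding \<Phi>_def \<phi>_def by (simp add: ac_simps)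
  qed
  then have phi_int: "(\<phi> has_integral (\<Phi> b - \<Phi> a)) {a..b}"
    by (intro fundamental_theorem_of_calculus[OF ab(1)])
       (auto simp: has_real_derivative_iff_has_vector_derivative[symmetric] intro: DERIV_subset)
  have "norm (integral {a..b} (\<lambda>s. T t s *v (P s *v g s))) \<le> integral {a..b} \<phi>"
  proof (rule integral_norm_bound_integral[OF int])
    show "\<phi> integrable_on {a..b}" using phi_int by blast
    fix s assume s: "s \<in> {a..b}"
    have "norm (T t s *v (P s *v g s)) \<le> K * (\<mu> t / \<mu> s) powr (-\<alpha>) * norm (g s)"
      using dP[of s t "g s"] s ab by auto
    also have "\<dots> \<le> K * (\<mu> t / \<mu> s) powr (-\<alpha>) * (\<beta> * deriv \<mu> s / \<mu> s)"
      using gb[of s] Kpos by (intro mult_left_mono) auto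
    also have "\<dots> = K * ((\<mu> t / \<mu> s) powr (-\<alpha>) * (\<beta> * deriv \<mu> s / \<mu> s))"
      by (simp only: mult.assoc)
    also have "\<dots> = \<phi> s"
      unfolding powr_aux1[where x="\<mu> t" and y="\<mu> s", OF mupos mupos] \<phi>_def by (simp add: ac_simps)
    finally show "norm (T t s *v (P s *v g s)) \<le> \<phi> s" .
  qed
  also have "\<dots> = \<Phi> b - \<Phi> a" using phi_int by blast
  also have "\<dots> = K * \<beta> / \<alpha> * \<mu> t powr (-\<alpha>) * (\<mu> b powr \<alpha> - \<mu> a powr \<alpha>)"
    unfolding \<Phi>_def using apos by (simp add: field_simps)
  finally show ?thesis .
qed

lemma IBQ:
  assumes int: "(\<lambda>s. T t s *v (g s - P s *v g s)) integrable_on {a..b}" and ab: "a \<le> b" "t \<le> a"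
    and gb: "\<And>s. norm (g s) \<le> \<beta> * deriv \<mu> s / \<mu> s"
  shows "norm (integral {a..b} (\<lambda>s. T t s *v (g s - P s *v g s))) \<le> K * \<beta> / \<alpha> * \<mu> t powr \<alpha> * (\<mu> a powr (-\<alpha>) - \<mu> b powr (-\<alpha>))"
proof -
  define \<Phi> where "\<Phi> s = - (K * \<beta> / \<alpha> * \<mu> t powr \<alpha> * \<mu> s powr (-\<alpha>))" for s
  define \<phi> where "\<phi> s = K * \<beta> * \<mu> t powr \<alpha> * (\<mu> s powr (-\<alpha> - 1) * deriv \<mu> s)" for s
  have "(\<Phi> has_real_derivative \<phi> s) (at s)" for s
  proof -
    have "((\<lambda>s. - (K * \<beta> / \<alpha> * \<mu> t powr \<alpha> * \<mu> s powr (-\<alpha>))) has_real_derivative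
        - (K * \<beta> / \<alpha> * \<mu> t powr \<alpha> * ((-\<alpha>) * \<mu> s powr (-\<alpha> - of_nat 1) * deriv \<mu> s))) (at s)"
      by (intro DERIV_minus DERIV_cmult DERIV_fun_powr muder mupos)
    then show ?thesis using apos unfolding \<Phi>_def \<phi>_def by (simp add: ac_simps)
  qed
  then have phi_int: "(\<phi> has_integral (\<Phi> b - \<Phi> a)) {a..b}"
    by (intro fundamental_theorem_of_calculus[OF ab(1)])
       (auto simp: has_real_derivative_iff_has_vector_derivative[symmetric] intro: DERIV_subset)
  have "norm (integral {a..b} (\<lambda>s. T t s *v (g s - P s *v g s))) \<le> integral {a..b} \<phi>"
  proof (rule integral_norm_bound_integral[OF int])
    show "\<phi> integrable_on {a..b}" using phi_int by blast
    fix s assume s: "s \<in> {a..b}"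
    have "norm (T t s *v (g s - P s *v g s)) \<le> K * (\<mu> s / \<mu> t) powr (-\<alpha>) * norm (g s)"
      using dQ[of t s "g s"] s ab by auto
    also have "\<dots> \<le> K * (\<mu> s / \<mu> t) powr (-\<alpha>) * (\<beta> * deriv \<mu> s / \<mu> s)"
      using gb[of s] Kpos by (intro mult_left_mono) auto
    also have "\<dots> = K * ((\<mu> s / \<mu> t) powr (-\<alpha>) * (\<beta> * deriv \<mu> s / \<mu> s))"
      by (simp only: mult.assoc)
    also have "\<dots> = \<phi> s"
      unfolding powr_aux2[where x="\<mu> t" and y="\<mu> s", OF mupos mupos] \<phi>_def by (simp add: ac_simps)
    finally show "norm (T t s *v (g s - P s *v g s)) \<le> \<phi> s" .
  qed
  also have "\<dots> = \<Phi> b - \<Phi> a" using phi_int by blast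
  also have "\<dots> = K * \<beta> / \<alpha> * \<mu> t powr \<alpha> * (\<mu> a powr (-\<alpha>) - \<mu> b powr (-\<alpha>))"
    unfolding \<Phi>_def using apos by (simp add: field_simps)
  finally show ?thesis .
qed

end


context dichsys begin

lemma powr_div_neg:
  fixes x y a :: real
  assumes "x > 0" "y > 0"
  shows "(x / y) powr (-a) = x powr (-a) * y powr a"
proof -
  have l: "ln (x/y) = ln x - ln y" using assms by (rule ln_divide_pos)
  show ?thesis using assms by (simp add: powr_def l exp_add[symmetric] algebra_simps)
qed

lemma mu_cancel: "\<mu> t powr (-\<alpha>) * \<mu> t powr \<alpha> = 1"
  using mupos[of t] by (simp add: powr_add[symmetric])

lemma core:
  assumes h: "\<And>t. (h has_vector_derivative A t *v h t - g t) (at t)"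
    and gb: "\<And>s. norm (g s) \<le> \<beta> * deriv \<mu> s / \<mu> s" and \<beta>: "\<beta> \<ge> 0"
    and limP: "((\<lambda>r. T t r *v (P r *v h r)) \<longlongrightarrow> 0) at_bot"
    and limQ: "((\<lambda>r. T t r *v (h r - P r *v h r)) \<longlongrightarrow> 0) at_top"
  shows "norm (h t) \<le> 2 * K * \<beta> / \<alpha>"
proof -
  define C where "C = K * \<beta> / \<alpha>"
  have C0: "C \<ge> 0" unfolding C_def using Kpos apos \<beta> by simp
  have bP: "norm (P t *v h t) \<le> norm (T t r *v (P r *v h r)) + C" if "r \<le> t" for r
  proof -
    have hi: "((\<lambda>s. T t s *v (P s *v g s)) has_integral (T t r *v (P r *v h r) - T t t *v (P t *v h t))) {r..t}"
      by (rule HP[OF h that])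
    have eq: "P t *v h t = T t r *v (P r *v h r) - integral {r..t} (\<lambda>s. T t s *v (P s *v g s))"
      using integral_unique[OF hi] by (simp add: Tid)
    have "norm (integral {r..t} (\<lambda>s. T t s *v (P s *v g s))) \<le> C * \<mu> t powr (-\<alpha>) * (\<mu> t powr \<alpha> - \<mu> r powr \<alpha>)"
      unfolding C_def by (rule IBP[OF has_integral_integrable[OF hi] that order_refl gb])
    also have "\<dots> = C * (1 - \<mu> t powr (-\<alpha>) * \<mu> r powr \<alpha>)"
      using mu_cancel[of t] by (simp add: algebra_simps)
    also have "\<dots> \<le> C" using C0 by (simp add: mult_left_le)
    finally have ib: "norm (integral {r..t} (\<lambda>s. T t s *v (P s *v g s))) \<le> C" .
    show ?thesis unfolding eq
      using norm_triangle_ineq4[of "T t r *v (P r *v h r)" "integral {r..t} (\<lambda>s. T t s *v (P s *v g s))"] ib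
      by linarith
  qed
  have bQ: "norm (h t - P t *v h t) \<le> norm (T t r *v (h r - P r *v h r)) + C" if "t \<le> r" for r
  proof -
    have hi: "((\<lambda>s. T t s *v (g s - P s *v g s)) has_integral (T t t *v (h t - P t *v h t) - T t r *v (h r - P r *v h r))) {t..r}"
      by (rule HQ[OF h that])
    have eq: "h t - P t *v h t = T t r *v (h r - P r *v h r) + integral {t..r} (\<lambda>s. T t s *v (g s - P s *v g s))"
      using integral_unique[OF hi] by (simp add: Tid)
    have "norm (integral {t..r} (\<lambda>s. T t s *v (g s - P s *v g s))) \<le> C * \<mu> t powr \<alpha> * (\<mu> t powr (-\<alpha>) - \<mu> r powr (-\<alpha>))"
      unfolding C_def by (rule IBQ[OF has_integral_integrable[OF hi] that order_refl gb])
    also have "\<dots> = C * (1 - \<mu> t powr \<alpha> * \<mu> r powr (-\<alpha>))"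
      using mu_cancel[of t] by (simp add: algebra_simps)
    also have "\<dots> \<le> C" using C0 by (simp add: mult_left_le)
    finally have ib: "norm (integral {t..r} (\<lambda>s. T t s *v (g s - P s *v g s))) \<le> C" .
    show ?thesis unfolding eq
      using norm_triangle_ineq[of "T t r *v (h r - P r *v h r)" "integral {t..r} (\<lambda>s. T t s *v (g s - P s *v g s))"] ib
      by linarith
  qed
  have nP: "norm (P t *v h t) \<le> C"
  proof (rule tendsto_le[OF trivial_limit_at_bot_linorder])
    show "((\<lambda>r. norm (T t r *v (P r *v h r)) + C) \<longlongrightarrow> C) at_bot"
      using tendsto_add[OF tendsto_norm[OF limP] tendsto_const] by simp
    show "((\<lambda>r. norm (P t *v h t)) \<longlongrightarrow> norm (P t *v h t)) at_bot" by simp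
    show "\<forall>\<^sub>F r in at_bot. norm (P t *v h t) \<le> norm (T t r *v (P r *v h r)) + C"
      using eventually_le_at_bot[of t] by (rule eventually_mono) (rule bP)
  qed
  have nQ: "norm (h t - P t *v h t) \<le> C"
  proof (rule tendsto_le[OF trivial_limit_at_top_linorder])
    show "((\<lambda>r. norm (T t r *v (h r - P r *v h r)) + C) \<longlongrightarrow> C) at_top"
      using tendsto_add[OF tendsto_norm[OF limQ] tendsto_const] by simp
    show "((\<lambda>r. norm (h t - P t *v h t)) \<longlongrightarrow> norm (h t - P t *v h t)) at_top" by simp
    show "\<forall>\<^sub>F r in at_top. norm (h t - P t *v h t) \<le> norm (T t r *v (h r - P r *v h r)) + C"
      using eventually_ge_at_top[of t] by (rule eventually_mono) (rule bQ)
  qed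
  have "norm (h t) \<le> norm (P t *v h t) + norm (h t - P t *v h t)"
    using norm_triangle_ineq[of "P t *v h t" "h t - P t *v h t"] by simp
  also have "\<dots> \<le> 2 * K * \<beta> / \<alpha>" using nP nQ unfolding C_def by simp
  finally show ?thesis .
qed

lemma bnd:
  assumes h: "\<And>t. (h has_vector_derivative A t *v h t - g t) (at t)"
    and hb: "bounded (range h)"
    and gb: "\<And>s. norm (g s) \<le> \<beta> * deriv \<mu> s / \<mu> s" and \<beta>: "\<beta> \<ge> 0"
  shows "norm (h t) \<le> 2 * K * \<beta> / \<alpha>"
proof (rule core[OF h gb \<beta>])
  obtain B where B: "\<And>r. norm (h r) \<le> B" using hb unfolding bounded_iff by blast
  show "((\<lambda>r. T t r *v (P r *v h r)) \<longlongrightarrow> 0) at_bot"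
  proof (rule Lim_null_comparison)
    show "\<forall>\<^sub>F r in at_bot. norm (T t r *v (P r *v h r)) \<le> K * (\<mu> t powr (-\<alpha>) * \<mu> r powr \<alpha>) * B"
      using eventually_le_at_bot[of t]
    proof (rule eventually_mono)
      fix r assume "r \<le> t"
      then have "norm (T t r *v (P r *v h r)) \<le> K * (\<mu> t / \<mu> r) powr (-\<alpha>) * norm (h r)" by (rule dP)
      also have "\<dots> \<le> K * (\<mu> t / \<mu> r) powr (-\<alpha>) * B"
        using Kpos B[of r] by (intro mult_left_mono) auto
      finally show "norm (T t r *v (P r *v h r)) \<le> K * (\<mu> t powr (-\<alpha>) * \<mu> r powr \<alpha>) * B"
        using powr_div_neg[OF mupos mupos, of t r \<alpha>] by simp
    qed
    have "((\<lambda>r. K * (\<mu> t powr (-\<alpha>) * \<mu> r powr \<alpha>) * B) \<longlongrightarrow> K * (\<mu> t powr (-\<alpha>) * 0) * B) at_bot"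
      by (intro tendsto_intros mupow_bot)
    then show "((\<lambda>r. K * (\<mu> t powr (-\<alpha>) * \<mu> r powr \<alpha>) * B) \<longlongrightarrow> 0) at_bot" by simp
  qed
  show "((\<lambda>r. T t r *v (h r - P r *v h r)) \<longlongrightarrow> 0) at_top"
  proof (rule Lim_null_comparison)
    show "\<forall>\<^sub>F r in at_top. norm (T t r *v (h r - P r *v h r)) \<le> K * (\<mu> r powr (-\<alpha>) * \<mu> t powr \<alpha>) * B"
      using eventually_ge_at_top[of t]
    proof (rule eventually_mono)
      fix r assume "t \<le> r"
      then have "norm (T t r *v (h r - P r *v h r)) \<le> K * (\<mu> r / \<mu> t) powr (-\<alpha>) * norm (h r)" by (rule dQ)
      also have "\<dots> \<le> K * (\<mu> r / \<mu> t) powr (-\<alpha>) * B"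
        using Kpos B[of r] by (intro mult_left_mono) auto
      finally show "norm (T t r *v (h r - P r *v h r)) \<le> K * (\<mu> r powr (-\<alpha>) * \<mu> t powr \<alpha>) * B"
        using powr_div_neg[OF mupos mupos, of r t \<alpha>] by simp
    qed
    have "((\<lambda>r. K * (\<mu> r powr (-\<alpha>) * \<mu> t powr \<alpha>) * B) \<longlongrightarrow> K * (0 * \<mu> t powr \<alpha>) * B) at_top"
      by (intro tendsto_intros mupow_top)
    then show "((\<lambda>r. K * (\<mu> r powr (-\<alpha>) * \<mu> t powr \<alpha>) * B) \<longlongrightarrow> 0) at_top" by simp
  qed
qed

end


context dichsys begin

lemma exist_bdd:
  assumes g: "continuous_on UNIV g"
    and gb: "\<And>s. norm (g s) \<le> \<beta> * deriv \<mu> s / \<mu> s" and \<beta>: "\<beta> \<ge> 0"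
  shows "\<exists>h. (\<forall>t. (h has_vector_derivative A t *v h t - g t) (at t)) \<and> bounded (range h)"
proof -
  obtain h0 where h0: "\<And>t. (h0 has_vector_derivative A t *v h0 t - g t) (at t)"
    using exist_sol[OF g, of 0] by blast
  define C where "C = K * \<beta> / \<alpha>"
  have C0: "C \<ge> 0" unfolding C_def using Kpos apos \<beta> by simp
  define WP where "WP r = T 0 r *v (P r *v h0 r)" for r
  define WQ where "WQ r = T 0 r *v (h0 r - P r *v h0 r)" for r
  have WPb: "norm (WP (-b) - WP (-a)) \<le> C * \<mu> (-a) powr \<alpha>" if "0 \<le> a" "a \<le> b" for a b
  proof -
    have hi: "((\<lambda>s. T 0 s *v (P s *v g s)) has_integral (WP (-b) - WP (-a))) {-b..-a}"
      unfolding WP_def by (rule HP[OF h0]) (use that in simp)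
    have "norm (WP (-b) - WP (-a)) \<le> C * \<mu> 0 powr (-\<alpha>) * (\<mu> (-a) powr \<alpha> - \<mu> (-b) powr \<alpha>)"
      using IBP[OF has_integral_integrable[OF hi] _ _ gb] that integral_unique[OF hi]
      unfolding C_def by simp
    also have "\<dots> \<le> C * \<mu> (-a) powr \<alpha>" using C0 by (simp add: mu0 mult_left_mono)
    finally show ?thesis .
  qed
  have phiP: "((\<lambda>a. C * \<mu> (-a) powr \<alpha>) \<longlongrightarrow> 0) at_top"
  proof -
    have "((\<lambda>a. \<mu> (-a) powr \<alpha>) \<longlongrightarrow> 0) at_top"
      using filterlim_compose[OF mupow_bot filterlim_uminus_at_bot_at_top] by simp
    then show ?thesis using tendsto_mult_right_zero by blast
  qed
  obtain LP where LP: "\<And>r. r \<ge> 0 \<Longrightarrow> norm (WP (-r) - LP) \<le> C * \<mu> (-r) powr \<alpha>"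
    using cauchy_lemma[of 0 "\<lambda>r. WP (-r)" "\<lambda>a. C * \<mu> (-a) powr \<alpha>", OF WPb phiP] by blast
  have WQb: "norm (WQ b - WQ a) \<le> C * \<mu> a powr (-\<alpha>)" if "0 \<le> a" "a \<le> b" for a b
  proof -
    have hi: "((\<lambda>s. T 0 s *v (g s - P s *v g s)) has_integral (WQ a - WQ b)) {a..b}"
      unfolding WQ_def by (rule HQ[OF h0]) (use that in simp)
    have "norm (WQ a - WQ b) \<le> C * \<mu> 0 powr \<alpha> * (\<mu> a powr (-\<alpha>) - \<mu> b powr (-\<alpha>))"
      using IBQ[OF has_integral_integrable[OF hi] _ _ gb] that integral_unique[OF hi]
      unfolding C_def by simp
    also have "\<dots> \<le> C * \<mu> a powr (-\<alpha>)" using C0 by (simp add: mu0 mult_left_mono)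
    finally show ?thesis by (simp add: norm_minus_commute)
  qed
  have phiQ: "((\<lambda>a. C * \<mu> a powr (-\<alpha>)) \<longlongrightarrow> 0) at_top"
    using tendsto_mult_right_zero[OF mupow_top] by blast
  obtain LQ where LQ: "\<And>r. r \<ge> 0 \<Longrightarrow> norm (WQ r - LQ) \<le> C * \<mu> r powr (-\<alpha>)"
    using cauchy_lemma[of 0 WQ "\<lambda>a. C * \<mu> a powr (-\<alpha>)", OF WQb phiQ] by blast
  define c where "c = P 0 *v LP + (LQ - P 0 *v LQ)"
  define h where "h t = h0 t - T t 0 *v c" for t
  have hsol: "(h has_vector_derivative A t *v h t - g t) (at t)" for t
    using has_vector_derivative_diff[OF h0[of t] Tv_der[where s=0 and v=c and t=t]]
    unfolding h_def by (simp add: algebra_simps)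
  define c0 where "c0 = real CARD('n) * real CARD('n) * norm (P 0)"
  have c0: "norm (P 0 *v v) \<le> c0 * norm v" for v
    using mv_norm_le[of "P 0" v] unfolding c0_def by simp
  have c0nn: "c0 \<ge> 0" unfolding c0_def by simp
  have WPP: "P 0 *v WP r = WP r" for r
    unfolding WP_def by (simp only: PT[symmetric] Pidem)
  have WQP: "P 0 *v WQ r = 0" for r
    unfolding WQ_def by (simp only: PT[symmetric] matrix_vector_mult_diff_distrib Pidem diff_self matrix_vector_mult_0_right)
  have Pc: "P 0 *v c = P 0 *v LP"
    unfolding c_def by (simp add: matrix_vector_right_distrib matrix_vector_mult_diff_distrib Pidem)
  have Qc: "c - P 0 *v c = LQ - P 0 *v LQ"
    using Pc unfolding c_def by simp
  have comp0: "T t r *v v = T t 0 *v (T 0 r *v v)" for t r v by (rule Tcomp)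
  have bnd: "norm (h t) \<le> 2 * K * \<beta> / \<alpha>" for t
  proof (rule core[OF hsol gb \<beta>])
    define E where "E = exp (M * \<bar>t - 0\<bar>)"
    have E: "norm (T t 0 *v v) \<le> E * norm v" for v unfolding E_def by (rule Tnorm)
    have E0: "E \<ge> 0" unfolding E_def by simp
    have eqP: "T t r *v (P r *v h r) = T t 0 *v (P 0 *v (WP r - LP))" for r
    proof -
      have "T t r *v (P r *v h r) = T t r *v (P r *v h0 r) - T t r *v (P r *v (T r 0 *v c))"
        unfolding h_def by (simp add: matrix_vector_mult_diff_distrib)
      also have "T t r *v (P r *v (T r 0 *v c)) = T t 0 *v (P 0 *v c)"
        using PT[of r 0 c, symmetric] Tcomp[of t 0 "P 0 *v c" r] by simp
      also have "T t r *v (P r *v h0 r) = T t 0 *v WP r"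
        unfolding WP_def by (rule comp0)
      finally show ?thesis
        using WPP[of r] Pc by (simp add: matrix_vector_mult_diff_distrib)
    qed
    show "((\<lambda>r. T t r *v (P r *v h r)) \<longlongrightarrow> 0) at_bot"
    proof (rule Lim_null_comparison)
      show "\<forall>\<^sub>F r in at_bot. norm (T t r *v (P r *v h r)) \<le> E * (c0 * (C * \<mu> r powr \<alpha>))"
        using eventually_le_at_bot[of 0]
      proof (rule eventually_mono)
        fix r :: real assume r: "r \<le> 0"
        have "norm (T t r *v (P r *v h r)) \<le> E * norm (P 0 *v (WP r - LP))"
          unfolding eqP by (rule E)
        also have "\<dots> \<le> E * (c0 * norm (WP r - LP))"
          by (intro mult_left_mono c0 E0)
        also have "\<dots> \<le> E * (c0 * (C * \<mu> r powr \<alpha>))"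
          using LP[of "-r"] r by (intro mult_left_mono E0 c0nn) auto
        finally show "norm (T t r *v (P r *v h r)) \<le> E * (c0 * (C * \<mu> r powr \<alpha>))" .
      qed
      have "((\<lambda>r. E * (c0 * (C * \<mu> r powr \<alpha>))) \<longlongrightarrow> E * (c0 * (C * 0))) at_bot"
        by (intro tendsto_intros mupow_bot)
      then show "((\<lambda>r. E * (c0 * (C * \<mu> r powr \<alpha>))) \<longlongrightarrow> 0) at_bot" by simp
    qed
    have eqQ: "T t r *v (h r - P r *v h r) = T t 0 *v ((WQ r - LQ) - P 0 *v (WQ r - LQ))" for r
    proof -
      have "T t r *v (h r - P r *v h r) = T t r *v (h0 r - P r *v h0 r) - (T t r *v (T r 0 *v c) - T t r *v (P r *v (T r 0 *v c)))"
        unfolding h_def by (simp add: matrix_vector_mult_diff_distrib)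
      also have "T t r *v (P r *v (T r 0 *v c)) = T t 0 *v (P 0 *v c)"
        using PT[of r 0 c, symmetric] Tcomp[of t 0 "P 0 *v c" r] by simp
      also have "T t r *v (T r 0 *v c) = T t 0 *v c"
        using Tcomp[of t 0 c r] by simp
      also have "T t r *v (h0 r - P r *v h0 r) = T t 0 *v WQ r"
        unfolding WQ_def by (rule comp0)
      finally have "T t r *v (h r - P r *v h r) = T t 0 *v (WQ r - (c - P 0 *v c))"
        by (simp add: matrix_vector_mult_diff_distrib)
      then show ?thesis
        using WQP[of r] Qc by (simp add: matrix_vector_mult_diff_distrib matrix_vector_right_distrib)
    qed
    show "((\<lambda>r. T t r *v (h r - P r *v h r)) \<longlongrightarrow> 0) at_top"
    proof (rule Lim_null_comparison)
      show "\<forall>\<^sub>F r in at_top. norm (T t r *v (h r - P r *v h r)) \<le> E * ((1 + c0) * (C * \<mu> r powr (-\<alpha>)))"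
        using eventually_ge_at_top[of 0]
      proof (rule eventually_mono)
        fix r :: real assume r: "0 \<le> r"
        have "norm (T t r *v (h r - P r *v h r)) \<le> E * norm ((WQ r - LQ) - P 0 *v (WQ r - LQ))"
          unfolding eqQ by (rule E)
        also have "\<dots> \<le> E * ((1 + c0) * norm (WQ r - LQ))"
        proof (intro mult_left_mono E0)
          show "norm ((WQ r - LQ) - P 0 *v (WQ r - LQ)) \<le> (1 + c0) * norm (WQ r - LQ)"
            using norm_triangle_ineq4[of "WQ r - LQ" "P 0 *v (WQ r - LQ)"] c0[of "WQ r - LQ"]
            by (simp add: algebra_simps)
        qed
        also have "\<dots> \<le> E * ((1 + c0) * (C * \<mu> r powr (-\<alpha>)))"
          using LQ[of r] r c0nn by (intro mult_left_mono E0) auto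
        finally show "norm (T t r *v (h r - P r *v h r)) \<le> E * ((1 + c0) * (C * \<mu> r powr (-\<alpha>)))" .
      qed
      have "((\<lambda>r. E * ((1 + c0) * (C * \<mu> r powr (-\<alpha>)))) \<longlongrightarrow> E * ((1 + c0) * (C * 0))) at_top"
        by (intro tendsto_intros mupow_top)
      then show "((\<lambda>r. E * ((1 + c0) * (C * \<mu> r powr (-\<alpha>)))) \<longlongrightarrow> 0) at_top" by simp
    qed
  qed
  have "bounded (range h)"
    unfolding bounded_iff using bnd by blast
  then show ?thesis using hsol by blast
qed

end


theorem lemma3p2:
  fixes A :: "real \<Rightarrow> real^'n^'n"
    and T :: "real \<Rightarrow> real \<Rightarrow> real^'n^'n"
    and P :: "real \<Rightarrow> real^'n^'n"
    and \<mu> :: "real \<Rightarrow> real"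
    and f :: "real \<Rightarrow> real^'n \<Rightarrow> real^'n"
    and X :: "real \<Rightarrow> real \<Rightarrow> real^'n \<Rightarrow> real^'n"
    and K \<alpha> \<beta> \<gamma> :: real
  assumes A_cont: "continuous_on UNIV A"
    and A_bdd: "bounded (range A)"
    and T_evol: "evolution_operator A T"
    and mu: "growth_rate \<mu>"
    and dich: "algebraic_dichotomy T \<mu> P K \<alpha>"
    and f_cont: "continuous_on UNIV (\<lambda>(t, x). f t x)"
    and beta: "\<beta> \<ge> 0" and gamma: "\<gamma> \<ge> 0"
    and f_bound: "\<And>t x. norm (f t x) \<le> \<beta> * deriv \<mu> t / \<mu> t"
    and f_lip: "\<And>t x1 x2. norm (f t x1 - f t x2) \<le> \<gamma> * deriv \<mu> t / \<mu> t * norm (x1 - x2)"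
    and small: "6 * K * \<gamma> / \<alpha> < 1"
    and X_init: "\<And>\<tau> \<xi>. X \<tau> \<tau> \<xi> = \<xi>"
    and X_sol: "\<And>\<tau> \<xi> t. ((\<lambda>t. X t \<tau> \<xi>) has_vector_derivative
                          (A t *v X t \<tau> \<xi> + f t (X t \<tau> \<xi>))) (at t)"
  shows "\<forall>\<tau> \<xi>. \<exists>!h :: real \<Rightarrow> real^'n.
           (\<forall>t. (h has_vector_derivative (A t *v h t - f t (X t \<tau> \<xi>))) (at t))
           \<and> bounded (range h)
         \<and> (\<forall>h. (\<forall>t. (h has_vector_derivative (A t *v h t - f t (X t \<tau> \<xi>))) (at t))
                \<and> bounded (range h) \<longrightarrow> (\<forall>t. norm (h t) \<le> 2 * K * \<beta> / \<alpha>))"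
proof (intro allI)
  fix \<tau> \<xi>
  obtain B where B: "B > 0" "\<And>t. norm (A t) \<le> B"
    using A_bdd unfolding bounded_pos by auto
  define M where "M = real CARD('n) * real CARD('n) * B"
  have Abnd: "norm (A t *v v) \<le> M * norm v" for t v
  proof -
    have "norm (A t *v v) \<le> real CARD('n) * real CARD('n) * norm (A t) * norm v"
      by (rule mv_norm_le)
    also have "\<dots> \<le> M * norm v" unfolding M_def
      using B(2)[of t] by (intro mult_right_mono mult_left_mono) auto
    finally show ?thesis .
  qed
  have Mnn: "0 \<le> M" unfolding M_def using B by simp
  have Tid: "\<And>s. T s s = mat 1" and Tder: "\<And>s t. ((\<lambda>t. T t s) has_vector_derivative (A t ** T t s)) (at t)"
    using T_evol unfolding evolution_operator_def by auto
  have Kpos: "K > 0" and apos: "\<alpha> > 0"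
    and PP: "\<And>s. P s ** P s = P s" and TP: "\<And>t s. T t s ** P s = P t ** T t s"
    and oP: "\<And>t s. t \<ge> s \<Longrightarrow> opnorm (T t s ** P s) \<le> K * (\<mu> t / \<mu> s) powr (-\<alpha>)"
    and oQ: "\<And>t s. t \<le> s \<Longrightarrow> opnorm (T t s ** (mat 1 - P s)) \<le> K * (\<mu> s / \<mu> t) powr (-\<alpha>)"
    using dich unfolding algebraic_dichotomy_def by auto
  have opn: "norm (Q *v v) \<le> opnorm Q * norm v" for Q :: "real^'n^'n" and v
    unfolding opnorm_def using onorm[OF matrix_vector_mul_bounded_linear] by blast
  have Pidem: "\<And>s v. P s *v (P s *v v) = P s *v v"
    by (simp add: matrix_vector_mul_assoc PP)
  have PT: "\<And>t s v. T t s *v (P s *v v) = P t *v (T t s *v v)"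
    by (simp add: matrix_vector_mul_assoc TP)
  have dP: "\<And>t s v. s \<le> t \<Longrightarrow> norm (T t s *v (P s *v v)) \<le> K * (\<mu> t / \<mu> s) powr (-\<alpha>) * norm v"
  proof -
    fix t s :: real and v :: "real^'n" assume "s \<le> t"
    have "norm (T t s *v (P s *v v)) \<le> opnorm (T t s ** P s) * norm v"
      using opn[of "T t s ** P s" v] by (simp add: matrix_vector_mul_assoc)
    also have "\<dots> \<le> K * (\<mu> t / \<mu> s) powr (-\<alpha>) * norm v"
      using oP[OF \<open>s \<le> t\<close>] by (intro mult_right_mono) auto
    finally show "norm (T t s *v (P s *v v)) \<le> K * (\<mu> t / \<mu> s) powr (-\<alpha>) * norm v" .
  qed
  have dQ: "\<And>t s v. t \<le> s \<Longrightarrow> norm (T t s *v (v - P s *v v)) \<le> K * (\<mu> s / \<mu> t) powr (-\<alpha>) * norm v"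
  proof -
    fix t s :: real and v :: "real^'n" assume "t \<le> s"
    have "norm (T t s *v (v - P s *v v)) \<le> opnorm (T t s ** (mat 1 - P s)) * norm v"
      using opn[of "T t s ** (mat 1 - P s)" v]
      by (simp add: matrix_vector_mul_assoc[symmetric] matrix_vector_mult_diff_rdistrib)
    also have "\<dots> \<le> K * (\<mu> s / \<mu> t) powr (-\<alpha>) * norm v"
      using oQ[OF \<open>t \<le> s\<close>] by (intro mult_right_mono) auto
    finally show "norm (T t s *v (v - P s *v v)) \<le> K * (\<mu> s / \<mu> t) powr (-\<alpha>) * norm v" .
  qed
  have mupos: "\<And>t. \<mu> t > 0" and mudiff: "\<And>t. \<mu> differentiable (at t)"
    and mu0: "\<mu> 0 = 1" and mubot: "(\<mu> \<longlongrightarrow> 0) at_bot" and mutop: "filterlim \<mu> at_top at_top"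
    using mu unfolding growth_rate_def by auto
  have muder: "\<And>t. (\<mu> has_real_derivative deriv \<mu> t) (at t)"
    using mudiff DERIV_deriv_iff_real_differentiable by blast
  interpret D: dichsys A T M P \<mu> K \<alpha>
    by unfold_locales (fact Abnd Mnn Tid Tder Kpos apos Pidem PT dP dQ mupos muder mubot mutop mu0)+
  define g where "g t = f t (X t \<tau> \<xi>)" for t
  have Xc: "continuous_on UNIV (\<lambda>t. X t \<tau> \<xi>)"
    using has_vector_derivative_continuous[OF X_sol] by (simp add: continuous_at_imp_continuous_on)
  have "continuous_on UNIV ((\<lambda>(t, x). f t x) \<circ> (\<lambda>t. (t, X t \<tau> \<xi>)))"
    by (rule continuous_on_compose[OF continuous_on_Pair[OF continuous_on_id Xc]])
       (rule continuous_on_subset[OF f_cont subset_UNIV])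
  then have gc: "continuous_on UNIV g" unfolding g_def by (simp add: o_def)
  have gb: "\<And>s. norm (g s) \<le> \<beta> * deriv \<mu> s / \<mu> s" unfolding g_def by (rule f_bound)
  obtain h where h: "\<And>t. (h has_vector_derivative A t *v h t - g t) (at t)" and hb: "bounded (range h)"
    using D.exist_bdd[OF gc gb beta] by blast
  have allb: "\<forall>h. (\<forall>t. (h has_vector_derivative (A t *v h t - g t)) (at t))
                \<and> bounded (range h) \<longrightarrow> (\<forall>t. norm (h t) \<le> 2 * K * \<beta> / \<alpha>)"
    using D.bnd[OF _ _ gb beta] by blast
  have uniq: "h1 = h2" if h1: "\<And>t. (h1 has_vector_derivative A t *v h1 t - g t) (at t)" and b1: "bounded (range h1)"
    and h2: "\<And>t. (h2 has_vector_derivative A t *v h2 t - g t) (at t)" and b2: "bounded (range h2)" for h1 h2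
  proof
    fix t
    define d where "d t = h1 t - h2 t" for t
    have dsol: "(d has_vector_derivative A t *v d t - (\<lambda>_. 0) t) (at t)" for t
      using has_vector_derivative_diff[OF h1[of t] h2[of t]] unfolding d_def
      by (simp add: matrix_vector_mult_diff_distrib)
    obtain B1 where "\<And>t. norm (h1 t) \<le> B1" using b1 unfolding bounded_iff by blast
    moreover obtain B2 where "\<And>t. norm (h2 t) \<le> B2" using b2 unfolding bounded_iff by blast
    ultimately have "\<And>t. norm (d t) \<le> B1 + B2" unfolding d_def
      by (meson add_mono norm_triangle_ineq4 order_trans)
    then have db: "bounded (range d)" unfolding bounded_iff by blast
    have "norm (d t) \<le> 2 * K * 0 / \<alpha>"
      by (rule D.bnd[OF dsol db]) simp_all
    then show "h1 t = h2 t" unfolding d_def by simp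
  qed
  show "\<exists>!h :: real \<Rightarrow> real^'n.
           (\<forall>t. (h has_vector_derivative (A t *v h t - f t (X t \<tau> \<xi>))) (at t))
           \<and> bounded (range h)
         \<and> (\<forall>h. (\<forall>t. (h has_vector_derivative (A t *v h t - f t (X t \<tau> \<xi>))) (at t))
                \<and> bounded (range h) \<longrightarrow> (\<forall>t. norm (h t) \<le> 2 * K * \<beta> / \<alpha>))"
    unfolding g_def[symmetric]
  proof (rule ex1I[of _ h])
    show "(\<forall>t. (h has_vector_derivative A t *v h t - g t) (at t)) \<and> bounded (range h) \<and>
        (\<forall>h. (\<forall>t. (h has_vector_derivative A t *v h t - g t) (at t)) \<and> bounded (range h) \<longrightarrow>
          (\<forall>t. norm (h t) \<le> 2 * K * \<beta> / \<alpha>))"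
      using h hb allb by blast
    fix h' assume "(\<forall>t. (h' has_vector_derivative A t *v h' t - g t) (at t)) \<and> bounded (range h') \<and>
        (\<forall>h. (\<forall>t. (h has_vector_derivative A t *v h t - g t) (at t)) \<and> bounded (range h) \<longrightarrow>
          (\<forall>t. norm (h t) \<le> 2 * K * \<beta> / \<alpha>))"
    then show "h' = h" using uniq[of h' h] h hb by blast
  qed
qed


end
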